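(* Let $C_1,\dots,C_n:\mathbb R\to\mathbb R$ be strictly convex and continuously differentiable and satisfy Assumption A2 with scaling factors $\zeta_i>0$, $\boldsymbol Z=\mathrm{diag}(\zeta_i)$. Let $\boldsymbol L_Q$ be the Laplacian of a connected undirected graph on $\{1,\dots,n\}$ with symmetric positive edge weights. Then for every $\boldsymbol u\in\mathbb R^n$, $$\boldsymbol u^T\boldsymbol Z\boldsymbol L_Q\nabla C(\boldsymbol u)\ge0,$$ with equality if and only if $\nabla C(\boldsymbol u)\in\mathrm{range}(\mathbf 1_n)$, i.e. $\nabla C_1(u_1)=\dots=\nabla C_n(u_n)$. (In particular this holds for $\boldsymbol u=\boldsymbol u(\boldsymbol s)$ for any $\boldsymbol s$.)
   Context: Assumption A2: there exist a strictly convex $C^1$ function $C_{\mathrm o}:\mathbb R\to\mathbb R$ and $\zeta_i>0$ such that $\nabla C_i(u)=\nabla C_{\mathrm o}(\zeta_iu)$ for all $u\in\mathbb R$ and all $i$. $\nabla C(\boldsymbol u)=(\nabla C_i(u_i))_{i=1}^n$. Laplacian: $(\boldsymbol L_Q)_{ij}=-Q_{ij}$ for $i\ne j$, $(\boldsymbol L_Q)_{ii}=\sum_{j\ne i}Q_{ij}$, with $Q_{ij}=Q_{ji}>0$ on edges and $0$ otherwise. *)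

theory Defs
  imports "HOL-Analysis.Analysis"
begin

definition strictly_convex_on :: "real set \<Rightarrow> (real \<Rightarrow> real) \<Rightarrow> bool" where
  "strictly_convex_on S f \<longleftrightarrow>
     (\<forall>x\<in>S. \<forall>y\<in>S. x \<noteq> y \<longrightarrow>
        (\<forall>t::real. 0 < t \<and> t < 1 \<longrightarrow> f ((1 - t) * x + t * y) < (1 - t) * f x + t * f y))"

definition laplacian :: "('n::finite \<Rightarrow> 'n \<Rightarrow> real) \<Rightarrow> real^'n^'n" where
  "laplacian Q = (\<chi> i j. if i = j then (\<Sum>k\<in>UNIV - {i}. Q i k) else - Q i j)"

definition diag_mat :: "('n::finite \<Rightarrow> real) \<Rightarrow> real^'n^'n" where
  "diag_mat z = (\<chi> i j. if i = j then z i else 0)"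

text \<open>Q encodes the weights of an undirected graph on the index set: symmetric, nonnegative,
  the edges being the pairs i \<noteq> j with Q i j > 0 (weight 0 means no edge).\<close>
definition edge_weights :: "('n \<Rightarrow> 'n \<Rightarrow> real) \<Rightarrow> bool" where
  "edge_weights Q \<longleftrightarrow> (\<forall>i j. Q i j = Q j i) \<and> (\<forall>i j. Q i j \<ge> 0)"

definition graph_connected :: "('n \<Rightarrow> 'n \<Rightarrow> real) \<Rightarrow> bool" where
  "graph_connected Q \<longleftrightarrow> (\<forall>i j. (i, j) \<in> {(a, b). a \<noteq> b \<and> Q a b > 0}\<^sup>*)"

end

theory Submission
  imports Defs
begin

lemma slope_bounds:
  fixes f df :: "real \<Rightarrow> real"
  assumes d: "\<And>x. (f has_real_derivative df x) (at x)"
    and cvx: "\<And>x y t. 0 < t \<Longrightarrow> t < 1 \<Longrightarrow> f ((1 - t) * x + t * y) \<le> (1 - t) * f x + t * f y"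
    and xy: "x < y"
  shows "df x \<le> (f y - f x) / (y - x)" "(f y - f x) / (y - x) \<le> df y"
proof -
  have lx: "((\<lambda>s. (f s - f x) / (s - x)) \<longlongrightarrow> df x) (at_right x)"
    using d[of x] unfolding has_field_derivative_iff by (rule tendsto_mono[OF at_le, rotated]) simp
  have ly: "((\<lambda>s. (f s - f y) / (s - y)) \<longlongrightarrow> df y) (at_left y)"
    using d[of y] unfolding has_field_derivative_iff by (rule tendsto_mono[OF at_le, rotated]) simp
  have key: "f s - f x \<le> ((s - x) / (y - x)) * (f y - f x) \<and> 1 - (s - x) / (y - x) = (y - s) / (y - x)"
    if s: "x < s" "s < y" for s
  proof -
    define t where "t = (s - x) / (y - x)"
    have yx: "y - x > 0" using xy by simp
    have t: "0 < t" "t < 1" using s yx by (auto simp: t_def divide_less_eq)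
    have "t * (y - x) = s - x" using yx by (simp add: t_def)
    hence "s = (1 - t) * x + t * y" by (simp add: algebra_simps)
    hence "f s \<le> (1 - t) * f x + t * f y" using cvx[OF t] by simp
    hence 1: "f s - f x \<le> t * (f y - f x)" by (simp add: algebra_simps)
    have "(1 - t) * (y - x) = y - s" using \<open>t * (y - x) = s - x\<close> by (simp add: algebra_simps)
    hence "1 - t = (y - s) / (y - x)" using yx by (simp add: eq_divide_eq)
    thus ?thesis using 1 by (simp add: t_def)
  qed
  have ev1: "\<forall>\<^sub>F s in at_right x. (f s - f x) / (s - x) \<le> (f y - f x) / (y - x)"
    unfolding eventually_at_right_field
  proof (intro exI[of _ y] conjI xy allI impI)
    fix s assume s: "x < s" "s < y"
    have "(f s - f x) / (s - x) \<le> ((s - x) / (y - x)) * (f y - f x) / (s - x)"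
      by (rule divide_right_mono) (use key[OF s] s in auto)
    also have "\<dots> = (f y - f x) / (y - x)" using s by simp
    finally show "(f s - f x) / (s - x) \<le> (f y - f x) / (y - x)" .
  qed
  have ev2: "\<forall>\<^sub>F s in at_left y. (f y - f x) / (y - x) \<le> (f s - f y) / (s - y)"
    unfolding eventually_at_left_field
  proof (intro exI[of _ x] conjI xy allI impI)
    fix s assume s: "x < s" "s < y"
    have "f s - f x \<le> ((s - x) / (y - x)) * (f y - f x)" using key[OF s] by auto
    hence "f y - f s \<ge> (1 - (s - x) / (y - x)) * (f y - f x)" by (simp add: algebra_simps)
    hence "f y - f s \<ge> ((y - s) / (y - x)) * (f y - f x)" using key[OF s] by auto
    hence "f y - f s \<ge> (f y - f x) / (y - x) * (y - s)" by (simp add: ac_simps)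
    hence "(f y - f x) / (y - x) \<le> (f y - f s) / (y - s)" using s by (simp add: pos_le_divide_eq)
    also have "(f y - f s) / (y - s) = (f s - f y) / (s - y)" by (metis minus_diff_eq minus_divide_divide)
    finally show "(f y - f x) / (y - x) \<le> (f s - f y) / (s - y)" .
  qed
  show "df x \<le> (f y - f x) / (y - x)"
    by (rule tendsto_upperbound[OF lx ev1]) simp
  show "(f y - f x) / (y - x) \<le> df y"
    by (rule tendsto_lowerbound[OF ly ev2]) simp
qed


lemma strict_mono_deriv:
  fixes f df :: "real \<Rightarrow> real"
  assumes d: "\<And>x. (f has_real_derivative df x) (at x)"
    and sc: "strictly_convex_on UNIV f" and xy: "x < y"
  shows "df x < df y"
proof -
  have cvx: "f ((1 - t) * a + t * b) \<le> (1 - t) * f a + t * f b" if "0 < t" "t < 1" for a b t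
  proof (cases "a = b")
    case True thus ?thesis by (simp add: algebra_simps)
  next
    case False thus ?thesis using sc that unfolding strictly_convex_on_def
      by (meson less_imp_le UNIV_I)
  qed
  define z where "z = (x + y) / 2"
  have xz: "x < z" "z < y" using xy by (auto simp: z_def)
  have "\<forall>t. 0 < t \<and> t < 1 \<longrightarrow> f ((1 - t) * x + t * y) < (1 - t) * f x + t * f y"
    using sc xy unfolding strictly_convex_on_def by auto
  from this[rule_format, of "1/2"]
  have "f ((1 - 1/2) * x + (1/2) * y) < (1 - 1/2) * f x + (1/2) * f y" by simp
  moreover have "(1 - 1/2) * x + (1/2) * y = z" by (simp add: z_def)
  ultimately have fz: "f z - f x < f y - f z" by simp
  have zx: "z - x = y - z" "z - x > 0" using xy by (auto simp: z_def field_simps)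
  have "(f z - f x) / (z - x) < (f y - f z) / (y - z)"
    using divide_strict_right_mono[OF fz zx(2)] by (simp only: zx(1)[symmetric])
  with slope_bounds(1)[OF d cvx xz(1)] slope_bounds(2)[OF d cvx xz(2)]
  show ?thesis by linarith
qed

lemma mono_prod:
  fixes h :: "real \<Rightarrow> real"
  assumes sm: "\<And>a b. a < b \<Longrightarrow> h a < h b"
  shows "(a - b) * (h a - h b) \<ge> 0" "(a - b) * (h a - h b) = 0 \<Longrightarrow> h a = h b"
proof -
  consider "a < b" | "a = b" | "b < a" by linarith
  then have "(a - b) * (h a - h b) > 0 \<or> a = b"
  proof cases
    case 1 then show ?thesis using sm[OF 1] by (auto intro: mult_neg_neg)
  next
    case 3 then show ?thesis using sm[OF 3] by (auto intro: mult_pos_pos)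
  qed simp
  thus "(a - b) * (h a - h b) \<ge> 0" "(a - b) * (h a - h b) = 0 \<Longrightarrow> h a = h b" by auto
qed

lemma lap_mult:
  fixes Q :: "'n::finite \<Rightarrow> 'n \<Rightarrow> real"
  shows "(laplacian Q *v g) $ i = (\<Sum>j\<in>UNIV. Q i j * (g$i - g$j))"
proof -
  let ?L = "\<lambda>j. (if i = j then (\<Sum>k\<in>UNIV - {i}. Q i k) else - Q i j) * g$j"
  have "(laplacian Q *v g) $ i = (\<Sum>j\<in>UNIV. ?L j)"
    by (simp add: laplacian_def matrix_vector_mult_def)
  also have "\<dots> = ?L i + (\<Sum>j\<in>UNIV - {i}. ?L j)" using sum.remove[of UNIV i ?L] by simp
  also have "(\<Sum>j\<in>UNIV - {i}. ?L j) = (\<Sum>j\<in>UNIV - {i}. - Q i j * g$j)"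
    by (rule sum.cong) auto
  also have "?L i + (\<Sum>j\<in>UNIV - {i}. - Q i j * g$j) = (\<Sum>j\<in>UNIV - {i}. Q i j * (g$i - g$j))"
  proof -
    have "(\<Sum>j\<in>UNIV - {i}. Q i j * (g$i - g$j)) = (\<Sum>j\<in>UNIV - {i}. Q i j * g$i + - Q i j * g$j)"
      by (rule sum.cong) (auto simp: algebra_simps)
    also have "\<dots> = (\<Sum>j\<in>UNIV - {i}. Q i j) * g$i + (\<Sum>j\<in>UNIV - {i}. - Q i j * g$j)"
      by (simp only: sum.distrib sum_distrib_right)
    finally show ?thesis by simp
  qed
  also have "\<dots> = Q i i * (g$i - g$i) + (\<Sum>j\<in>UNIV - {i}. Q i j * (g$i - g$j))" by simp
  also have "\<dots> = (\<Sum>j\<in>UNIV. Q i j * (g$i - g$j))"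
    using sum.remove[of UNIV i "\<lambda>j. Q i j * (g$i - g$j)"] by simp
  finally show ?thesis .
qed

lemma diag_mult: "(diag_mat z *v w) $ i = z i * w $ i"
proof -
  have "(diag_mat z *v w) $ i = (\<Sum>j\<in>UNIV. (if i = j then z i else 0) * w$j)"
    by (simp add: diag_mat_def matrix_vector_mult_def)
  also have "\<dots> = (\<Sum>j\<in>UNIV. if j = i then z i * w$j else 0)" by (rule sum.cong) auto
  also have "\<dots> = z i * w $ i" by simp
  finally show ?thesis .
qed

lemma quad_form:
  fixes Q :: "'n::finite \<Rightarrow> 'n \<Rightarrow> real"
  assumes sym: "\<And>i j. Q i j = Q j i"
  shows "2 * (u \<bullet> ((diag_mat \<zeta> ** laplacian Q) *v g)) =
    (\<Sum>i\<in>UNIV. \<Sum>j\<in>UNIV. Q i j * ((\<zeta> i * u$i - \<zeta> j * u$j) * (g$i - g$j)))"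
proof -
  define v where "v i = \<zeta> i * u$i" for i
  have S0: "u \<bullet> ((diag_mat \<zeta> ** laplacian Q) *v g) = (\<Sum>i\<in>UNIV. u$i * (\<zeta> i * (\<Sum>j\<in>UNIV. Q i j * (g$i - g$j))))"
    by (simp add: matrix_vector_mul_assoc[symmetric] inner_vec_def diag_mult lap_mult)
  have S: "u \<bullet> ((diag_mat \<zeta> ** laplacian Q) *v g) = (\<Sum>i\<in>UNIV. \<Sum>j\<in>UNIV. Q i j * v i * (g$i - g$j))"
    unfolding S0 v_def by (simp add: sum_distrib_left mult_ac)
  have sw: "(\<Sum>i\<in>UNIV. \<Sum>j\<in>UNIV. Q i j * v i * (g$i - g$j)) = (\<Sum>i\<in>UNIV. \<Sum>j\<in>UNIV. Q j i * v j * (g$j - g$i))"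
    by (rule sum.swap)
  have e1: "\<And>i j. Q j i * v j * (g$j - g$i) = - (Q i j * v j * (g$i - g$j))"
  proof -
    fix i j show "Q j i * v j * (g$j - g$i) = - (Q i j * v j * (g$i - g$j))"
      using sym[of j i] by (simp add: algebra_simps)
  qed
  have e2: "\<And>i j. Q i j * v i * (g$i - g$j) + - (Q i j * v j * (g$i - g$j)) = Q i j * ((v i - v j) * (g$i - g$j))"
    by (simp add: algebra_simps)
  have "2 * (u \<bullet> ((diag_mat \<zeta> ** laplacian Q) *v g)) =
      (\<Sum>i\<in>UNIV. \<Sum>j\<in>UNIV. Q i j * v i * (g$i - g$j)) + (\<Sum>i\<in>UNIV. \<Sum>j\<in>UNIV. - (Q i j * v j * (g$i - g$j)))"
    using S sw by (simp only: e1 mult_2)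
  also have "\<dots> = (\<Sum>i\<in>UNIV. \<Sum>j\<in>UNIV. Q i j * ((v i - v j) * (g$i - g$j)))"
    by (simp only: sum.distrib[symmetric] e2)
  finally show ?thesis by (simp add: v_def)
qed

theorem corollary1:
  fixes C :: "'n::finite \<Rightarrow> real \<Rightarrow> real"
    and dC :: "'n \<Rightarrow> real \<Rightarrow> real"
    and Co dCo :: "real \<Rightarrow> real"
    and \<zeta> :: "'n \<Rightarrow> real"
    and Q :: "'n \<Rightarrow> 'n \<Rightarrow> real"
    and u :: "real^'n"
  assumes C_deriv: "\<And>i x. (C i has_real_derivative dC i x) (at x)"
    and C_C1: "\<And>i. continuous_on UNIV (dC i)"
    and C_strict: "\<And>i. strictly_convex_on UNIV (C i)"
    and Co_deriv: "\<And>x. (Co has_real_derivative dCo x) (at x)"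
    and Co_C1: "continuous_on UNIV dCo"
    and Co_strict: "strictly_convex_on UNIV Co"
    and zeta_pos: "\<And>i. \<zeta> i > 0"
    and A2: "\<And>i x. dC i x = dCo (\<zeta> i * x)"
    and Q_graph: "edge_weights Q"
    and Q_conn: "graph_connected Q"
  shows "u \<bullet> ((diag_mat \<zeta> ** laplacian Q) *v (\<chi> i. dC i (u $ i))) \<ge> 0
     \<and> (u \<bullet> ((diag_mat \<zeta> ** laplacian Q) *v (\<chi> i. dC i (u $ i))) = 0
          \<longleftrightarrow> (\<chi> i. dC i (u $ i)) \<in> range (\<lambda>c::real. (\<chi> i::'n. c)))"
proof -
  define g :: "real^'n" where "g = (\<chi> i. dC i (u $ i))"
  define v where "v i = \<zeta> i * u$i" for i
  have gv: "g$i = dCo (v i)" for i by (simp add: g_def v_def A2)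
  have sm: "\<And>a b. a < b \<Longrightarrow> dCo a < dCo b"
    by (rule strict_mono_deriv[OF Co_deriv Co_strict])
  have sym: "\<And>i j. Q i j = Q j i" and qnn: "\<And>i j. Q i j \<ge> 0"
    using Q_graph by (auto simp: edge_weights_def)
  define T where "T i j = Q i j * ((v i - v j) * (g$i - g$j))" for i j
  have T_nn: "T i j \<ge> 0" for i j
    unfolding T_def gv using mono_prod(1)[where h=dCo and a="v i" and b="v j", OF sm] qnn[of i j] by simp
  have Q2: "2 * (u \<bullet> ((diag_mat \<zeta> ** laplacian Q) *v g)) = (\<Sum>i\<in>UNIV. \<Sum>j\<in>UNIV. T i j)"
    by (simp add: quad_form[OF sym] T_def v_def)
  have nn: "(\<Sum>i\<in>UNIV. \<Sum>j\<in>UNIV. T i j) \<ge> 0" by (intro sum_nonneg T_nn)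
  have eq: "u \<bullet> ((diag_mat \<zeta> ** laplacian Q) *v g) = 0 \<longleftrightarrow> g \<in> range (\<lambda>c::real. (\<chi> i::'n. c))"
  proof
    assume "u \<bullet> ((diag_mat \<zeta> ** laplacian Q) *v g) = 0"
    hence "(\<Sum>i\<in>UNIV. \<Sum>j\<in>UNIV. T i j) = 0" using Q2 by simp
    hence "\<forall>i\<in>UNIV. (\<Sum>j\<in>UNIV. T i j) = 0"
      by (subst (asm) sum_nonneg_eq_0_iff) (auto intro: sum_nonneg T_nn)
    hence Tz: "T i j = 0" for i j
      using sum_nonneg_eq_0_iff[of UNIV "T i"] T_nn by auto
    have edge: "g$a = g$b" if "Q a b > 0" for a b
    proof -
      have "(v a - v b) * (g$a - g$b) = 0" using Tz[of a b] that by (simp add: T_def)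
      thus ?thesis unfolding gv by auto
    qed
    have path: "g$i = g$j" if "(i, j) \<in> {(a, b). a \<noteq> b \<and> Q a b > 0}\<^sup>*" for i j
      using that
    proof (induction rule: rtrancl_induct)
      case base then show ?case by simp
    next
      case (step y z) then show ?case using edge by auto
    qed
    fix k :: 'n
    have "\<forall>i. g$i = g$k" using path Q_conn unfolding graph_connected_def by blast
    hence "g = (\<chi> i. g$k)" by (simp add: vec_eq_iff)
    thus "g \<in> range (\<lambda>c::real. (\<chi> i::'n. c))" by blast
  next
    assume "g \<in> range (\<lambda>c::real. (\<chi> i::'n. c))"
    then obtain c where "g = (\<chi> i. c)" by blast
    hence "T i j = 0" for i j by (simp add: T_def)
    hence "(\<Sum>i\<in>UNIV. \<Sum>j\<in>UNIV. T i j) = 0" by simp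
    thus "u \<bullet> ((diag_mat \<zeta> ** laplacian Q) *v g) = 0" using Q2 by simp
  qed
  show ?thesis using eq nn Q2 unfolding g_def[symmetric] by simp
qed


end
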